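(* Let $p\geq 7$ be a prime and let $M$ be the $p\times p$ tridiagonal matrix with diagonal entries $M_{11}=M_{pp}=p-1$ and $M_{ii}=p-2$ for $2\leq i\leq p-1$, entries $M_{i,i+1}=M_{i+1,i}=1$ for $1\leq i\leq p-1$, and all other entries $0$. Let $x_1,\dots,x_p$ be non-negative integers satisfying $M(x_1,\ldots,x_p)^t\leq (p-1)!\,\mathbf{1}$ (entrywise, $\mathbf{1}$ the all-ones vector), and let $x_{\max}=\max\{x_i:1\leq i\leq p\}$. Then: (1) $|\{i\in[p] : x_i\leq \frac{(p-1)!}{p}\}|\geq \lceil \frac{p}{3}\rceil$; (2) if $\sum_{i=1}^p x_i=(p-1)!-k$, then $|\{i : x_i=x_{\max}\}|\geq p-k-2$; (3) $\sum_{i=1}^p x_i\leq (p-1)!-\lceil\frac{p}{3}\rceil+2$. *)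

theory Defs
  imports Complex_Main "HOL-Computational_Algebra.Primes"
begin

definition tridiagM :: "nat \<Rightarrow> nat \<Rightarrow> nat \<Rightarrow> int" where
  "tridiagM p i j =
     (if i = j then (if i = 1 \<or> i = p then int p - 1 else int p - 2)
      else if j = i + 1 \<or> i = j + 1 then 1 else 0)"

end

theory Submission
  imports Defs "HOL-Number_Theory.Residues"
begin

lemma row_expand:
  fixes f :: "nat \<Rightarrow> int"
  assumes "i \<in> {1..p}" "p \<ge> 3"
  shows "(\<Sum>j\<in>{1..p}. tridiagM p i j * f j) =
     (if i = 1 \<or> i = p then int p - 1 else int p - 2) * f i
     + (if i < p then f (i+1) else 0) + (if i \<ge> 2 then f (i-1) else 0)"
proof -
  have "(\<Sum>j\<in>{1..p}. tridiagM p i j * f j) =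
     (\<Sum>j\<in>{1..p}. (if j = i then (if i = 1 \<or> i = p then int p - 1 else int p - 2) * f i else 0)
       + (if j = i + 1 then f (i+1) else 0) + (if i = j + 1 then f (i - 1) else 0))"
    by (rule sum.cong) (auto simp: tridiagM_def)
  also have "\<dots> = (if i = 1 \<or> i = p then int p - 1 else int p - 2) * f i
     + (if i < p then f (i+1) else 0) + (if i \<ge> 2 then f (i-1) else 0)"
  proof -
    have a: "(\<Sum>j\<in>{1..p}. (if j = i + 1 then f (i+1) else 0)) = (if i < p then f (i+1) else 0)"
      using assms by (simp add: sum.delta')
    have "(\<Sum>j\<in>{1..p}. (if i = j + 1 then f (i - 1) else 0)) = (\<Sum>j\<in>{1..p}. (if j = i - 1 then f (i - 1) else 0))"
      using assms by (intro sum.cong) auto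
    also have "\<dots> = (if i \<ge> 2 then f (i-1) else 0)" using assms by (auto simp add: sum.delta')
    finally have b: "(\<Sum>j\<in>{1..p}. (if i = j + 1 then f (i - 1) else 0)) = (if i \<ge> 2 then f (i-1) else 0)" .
    show ?thesis using assms a b by (simp add: sum.distrib sum.delta')
  qed
  finally show ?thesis .
qed

lemma shift_down:
  fixes g :: "nat \<Rightarrow> int"
  shows "(\<Sum>i\<in>{1..n}. g (i - 1)) = (\<Sum>i\<in>{1..n}. g i) - g n + g 0"
  by (induction n) (auto simp: atLeastAtMostSuc_conv)

lemma shift_up:
  fixes g :: "nat \<Rightarrow> int"
  shows "(\<Sum>i\<in>{1..n}. g (i + 1)) = (\<Sum>i\<in>{1..n}. g i) - g 1 + g (n + 1)"
  by (induction n) (auto simp: atLeastAtMostSuc_conv)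

context
  fixes p :: nat and w :: "nat \<Rightarrow> int"
  assumes p7: "p \<ge> 7"
  and H: "\<forall>i\<in>{1..p}. 1 \<le> (if i = 1 \<or> i = p then int p - 1 else int p - 2) * w i
           + (if i < p then w (i+1) else 0) + (if i \<ge> 2 then w (i-1) else 0)"
begin

lemma win1: "1 \<le> w 1 \<or> 1 \<le> w 2"
proof (rule ccontr)
  assume "\<not> ?thesis"
  hence a: "w 1 \<le> 0" "w 2 \<le> 0" by auto
  have "(int p - 1) * w 1 \<le> 0" using a p7 by (simp add: mult_nonneg_nonpos)
  moreover have "1 \<le> (int p - 1) * w 1 + w 2" using H[rule_format, of 1] p7 by (simp add: numeral_2_eq_2)
  ultimately show False using a by linarith
qed

lemma winp: "1 \<le> w (p-1) \<or> 1 \<le> w p"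
proof (rule ccontr)
  assume "\<not> ?thesis"
  hence a: "w (p-1) \<le> 0" "w p \<le> 0" by auto
  have "(int p - 1) * w p \<le> 0" using a p7 by (simp add: mult_nonneg_nonpos)
  moreover have "1 \<le> (int p - 1) * w p + w (p-1)" using H[rule_format, of p] p7 by simp
  ultimately show False using a by linarith
qed

lemma wini:
  assumes "2 \<le> i" "i \<le> p - 1"
  shows "1 \<le> w (i-1) \<or> 1 \<le> w i \<or> 1 \<le> w (i+1)"
proof (rule ccontr)
  assume "\<not> ?thesis"
  hence a: "w (i-1) \<le> 0" "w i \<le> 0" "w (i+1) \<le> 0" by auto
  have "(int p - 2) * w i \<le> 0" using a p7 by (simp add: mult_nonneg_nonpos)
  moreover have "1 \<le> (int p - 2) * w i + w (i+1) + w (i-1)" 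
  proof -
    have "i \<noteq> 1" "i \<noteq> p" "i < p" "i \<in> {1..p}" using assms p7 by auto
    then show ?thesis using H[rule_format, of i] by simp
  qed
  ultimately show False using a by linarith
qed

definition g :: "nat \<Rightarrow> nat" where "g j = card {i\<in>{1..j}. 1 \<le> w i}"

lemma gstep:
  assumes "m < a" "a \<le> j" "1 \<le> w a"
  shows "g m + 1 \<le> g j"
proof -
  have "insert a {i\<in>{1..m}. 1 \<le> w i} \<subseteq> {i\<in>{1..j}. 1 \<le> w i}" using assms by auto
  hence "card (insert a {i\<in>{1..m}. 1 \<le> w i}) \<le> g j" unfolding g_def by (intro card_mono) auto
  moreover have "card (insert a {i\<in>{1..m}. 1 \<le> w i}) = g m + 1" unfolding g_def
    using assms by (subst card_insert_disjoint) auto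
  ultimately show ?thesis by simp
qed

lemma g_bound: "j \<le> p - 1 \<Longrightarrow> j \<le> 3 * g j + 1"
proof (induction j rule: less_induct)
  case (less j)
  show ?case
  proof (cases "j \<le> 2")
    case True
    show ?thesis
    proof (cases "j = 2")
      case True
      have "g 0 + 1 \<le> g 2" using win1 by (metis gstep le_refl one_le_numeral zero_less_one zero_less_numeral)
      then show ?thesis using True by simp
    next
      case False then show ?thesis using \<open>j \<le> 2\<close> by simp
    qed
  next
    case False
    have "1 \<le> w (j-2) \<or> 1 \<le> w (j-1) \<or> 1 \<le> w j"
      using wini[of "j-1"] False less.prems by (simp add: numeral_2_eq_2 Suc_diff_Suc)
    moreover have "j-3 < j-2" "j-2 \<le> j" "j-3 < j-1" "j-1 \<le> j" "j-3 < j" using False by auto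
    ultimately obtain a where "j - 3 < a" "a \<le> j" "1 \<le> w a" by blast
    hence "g (j-3) + 1 \<le> g j" by (rule gstep)
    moreover have "j - 3 \<le> 3 * g (j-3) + 1" using less.IH[of "j-3"] False less.prems by simp
    ultimately show ?thesis by linarith
  qed
qed

lemma card_A: "p \<le> 3 * card {i\<in>{1..p}. 1 \<le> w i}"
proof -
  obtain a where "p - 2 < a" "a \<le> p" "1 \<le> w a" 
  proof -
    have "p - 2 < p - 1" "p - 1 \<le> p" "p - 2 < p" using p7 by auto
    then show ?thesis using winp that by blast
  qed
  hence "g (p-2) + 1 \<le> g p" by (rule gstep)
  moreover have "p - 2 \<le> 3 * g (p-2) + 1" using g_bound[of "p-2"] p7 by simp
  ultimately show ?thesis unfolding g_def[symmetric] using p7 by linarith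
qed

definition pos :: "nat \<Rightarrow> int" where "pos j = (if 1 \<le> j \<and> j \<le> p then max 0 (w j) else 0)"

lemma negpt:
  assumes i: "i \<in> {1..p}"
  shows "(int p - 2) * max 0 (- w i) + of_bool (w i < 0) \<le> pos (i-1) + pos (i+1)"
proof (cases "w i < 0")
  case False
  then show ?thesis by (simp add: pos_def)
next
  case True
  define d where "d = (if i = 1 \<or> i = p then int p - 1 else int p - 2)"
  have h: "1 \<le> d * w i + (if i < p then w (i+1) else 0) + (if i \<ge> 2 then w (i-1) else 0)"
    using H i unfolding d_def by blast
  have "(d - (int p - 2)) * w i \<le> 0" using True unfolding d_def by (simp add: mult_nonneg_nonpos)
  hence e1: "d * w i \<le> (int p - 2) * w i" by (simp add: algebra_simps)
  have e2: "(if i < p then w (i+1) else 0) \<le> pos (i+1)" using i by (auto simp: pos_def)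
  have e3: "(if i \<ge> 2 then w (i-1) else 0) \<le> pos (i-1)" using i by (auto simp: pos_def)
  have e4: "(int p - 2) * max 0 (- w i) + of_bool (w i < 0) = 1 - (int p - 2) * w i" using True by simp
  show ?thesis unfolding e4 using h e1 e2 e3 by linarith
qed

definition PP where "PP = (\<Sum>i\<in>{1..p}. max 0 (w i))"
definition QQ where "QQ = (\<Sum>i\<in>{1..p}. max 0 (- w i))"
definition NN where "NN = (\<Sum>i\<in>{1..p}. (of_bool (w i < 0) :: int))"
definition SS where "SS = (\<Sum>i\<in>{1..p}. w i)"

lemma SS_eq2: "SS = (\<Sum>i\<in>{1..p}. w i)" by (simp add: SS_def)

lemma SS_eq: "SS = PP - QQ"
proof -
  have "SS = (\<Sum>i\<in>{1..p}. max 0 (w i) - max 0 (- w i))" unfolding SS_def by (intro sum.cong) auto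
  then show ?thesis unfolding PP_def QQ_def by (simp add: sum_subtractf)
qed

lemma pos_sum: "(\<Sum>i\<in>{1..p}. pos i) = PP"
  unfolding PP_def pos_def by (intro sum.cong) auto

lemma key: "(int p - 4) * PP + NN \<le> (int p - 2) * SS"
proof -
  have "(\<Sum>i\<in>{1..p}. (int p - 2) * max 0 (- w i) + of_bool (w i < 0)) \<le> (\<Sum>i\<in>{1..p}. pos (i-1) + pos (i+1))"
    by (intro sum_mono negpt)
  also have "\<dots> = (\<Sum>i\<in>{1..p}. pos (i-1)) + (\<Sum>i\<in>{1..p}. pos (i+1))" by (simp add: sum.distrib)
  also have "\<dots> = (PP - pos p + pos 0) + (PP - pos 1 + pos (p+1))"
    by (simp only: shift_down shift_up pos_sum)
  also have "\<dots> \<le> 2 * PP"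
  proof -
    have "pos p \<ge> 0" "pos 1 \<ge> 0" "pos 0 = 0" "pos (p+1) = 0" by (auto simp: pos_def)
    then show ?thesis by linarith
  qed
  finally have "(int p - 2) * QQ + NN \<le> 2 * PP"
    unfolding QQ_def NN_def by (simp add: sum.distrib sum_distrib_left)
  then show ?thesis unfolding SS_eq by (simp add: algebra_simps)
qed

lemma PP_ge: "int (card {i\<in>{1..p}. 1 \<le> w i}) \<le> PP"
proof -
  have "int (card {i\<in>{1..p}. 1 \<le> w i}) = (\<Sum>i\<in>{1..p}. (of_bool (1 \<le> w i) :: int))"
  proof -
    have "{i\<in>{1..p}. 1 \<le> w i} = {1..p} \<inter> {i. 1 \<le> w i}" by auto
    then show ?thesis by simp
  qed
  also have "\<dots> \<le> PP" unfolding PP_def by (intro sum_mono) auto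
  finally show ?thesis .
qed

lemma part3: "int p \<le> 3 * SS + 3"
proof (rule ccontr)
  assume "\<not> ?thesis"
  hence a: "3 * SS \<le> int p - 4" by simp
  have "0 < int p - 2" using p7 by simp
  hence "(int p - 2) * (3 * SS) \<le> (int p - 2) * (int p - 4)" using a by (intro mult_left_mono) auto
  moreover have "(int p - 4) * int p \<le> (int p - 4) * (3 * PP)"
    using card_A PP_ge p7 by (intro mult_left_mono) auto
  moreover have "NN \<ge> 0" unfolding NN_def by (intro sum_nonneg) auto
  ultimately have "(int p - 4) * int p \<le> (int p - 2) * (int p - 4)" using key by (simp add: algebra_simps)
  then show False using p7 by (simp add: algebra_simps)
qed

lemma PP_one: "a \<in> {1..p} \<Longrightarrow> max 0 (w a) \<le> PP"
  unfolding PP_def by (rule member_le_sum) auto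

lemma PP_three:
  assumes "a \<in> {1..p}" "b \<in> {1..p}" "c \<in> {1..p}" "a \<noteq> b" "a \<noteq> c" "b \<noteq> c"
  shows "max 0 (w a) + max 0 (w b) + max 0 (w c) \<le> PP"
proof -
  have "(\<Sum>i\<in>{a,b,c}. max 0 (w i)) \<le> PP" unfolding PP_def
    using assms by (intro sum_mono2) auto
  then show ?thesis using assms by simp
qed

lemma PP_big:
  assumes j: "j \<in> {1..p}" and wj: "w j \<le> -1"
  shows "int p \<le> PP"
proof -
  have w1: "w 1 \<ge> 1 \<or> w 2 \<ge> 1" using win1 by auto
  have wp: "w (p-1) \<ge> 1 \<or> w p \<ge> 1" using winp by auto
  consider "j = 1" | "j = p" | "j \<noteq> 1 \<and> j \<noteq> p" by blast
  then show ?thesis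
  proof cases
    case 1
    have h: "1 \<le> (int p - 1) * w 1 + w 2" using H[rule_format, of 1] p7 by (simp add: numeral_2_eq_2)
    have "(int p - 1) * w 1 \<le> (int p - 1) * (-1)" using wj 1 p7 by (intro mult_left_mono) auto
    hence "int p \<le> w 2" using h by simp
    moreover have "max 0 (w 2) \<le> PP" using p7 by (intro PP_one) auto
    ultimately show ?thesis by linarith
  next
    case 2
    have h: "1 \<le> (int p - 1) * w p + w (p-1)" using H[rule_format, of p] p7 by simp
    have "(int p - 1) * w p \<le> (int p - 1) * (-1)" using wj 2 p7 by (intro mult_left_mono) auto
    hence "int p \<le> w (p-1)" using h by simp
    moreover have "max 0 (w (p-1)) \<le> PP" using p7 by (intro PP_one) auto
    ultimately show ?thesis by linarith
  next
    case 3
    have h: "1 \<le> (int p - 2) * w j + w (j+1) + w (j-1)" using H[rule_format, of j] 3 j by simp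
    have "(int p - 2) * w j \<le> (int p - 2) * (-1)" using wj p7 by (intro mult_left_mono) auto
    hence s: "int p - 1 \<le> w (j+1) + w (j-1)" using h by simp
    obtain l where l: "l \<in> {1..p}" "l \<noteq> j+1" "l \<noteq> j-1" "w l \<ge> 1"
    proof (cases "j \<ge> 4")
      case True
      have "(1::nat) \<in> {1..p}" "(2::nat) \<in> {1..p}" "(1::nat) \<noteq> j+1" "(1::nat) \<noteq> j-1" "(2::nat) \<noteq> j+1" "(2::nat) \<noteq> j-1"
        using True p7 by auto
      then show ?thesis using w1 that by blast
    next
      case False
      have "p-1 \<in> {1..p}" "p \<in> {1..p}" "p-1 \<noteq> j+1" "p-1 \<noteq> j-1" "p \<noteq> j+1" "p \<noteq> j-1"
        using False p7 by auto
      then show ?thesis using wp that by blast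
    qed
    have "max 0 (w l) + max 0 (w (j+1)) + max 0 (w (j-1)) \<le> PP"
      using l 3 j by (intro PP_three) auto
    then show ?thesis using s l by linarith
  qed
qed

lemma part2:
  assumes m: "m \<in> w ` {1..p}" "\<forall>i\<in>{1..p}. m \<le> w i"
  shows "int p - SS - 1 \<le> int (card {i\<in>{1..p}. w i = m})"
proof -
  consider "m \<ge> 1" | "m = 0" | "m \<le> -1" by linarith
  then show ?thesis
  proof cases
    case 1
    have "(\<Sum>i\<in>{1..p}. (1::int)) \<le> SS" unfolding SS_def using m(2) 1 by (intro sum_mono) force
    then show ?thesis by simp
  next
    case 2
    have QQ0: "QQ = 0" unfolding QQ_def using m 2 by (intro sum.neutral) auto
    have "int (card {i\<in>{1..p}. w i = m}) + int (card {i\<in>{1..p}. 1 \<le> w i})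
        = (\<Sum>i\<in>{1..p}. (of_bool (w i = m) :: int)) + (\<Sum>i\<in>{1..p}. (of_bool (1 \<le> w i) :: int))"
    proof -
      have "{i\<in>{1..p}. w i = m} = {1..p} \<inter> {i. w i = m}" "{i\<in>{1..p}. 1 \<le> w i} = {1..p} \<inter> {i. 1 \<le> w i}" by auto
      then show ?thesis by simp
    qed
    also have "\<dots> = (\<Sum>i\<in>{1..p}. (1::int))" unfolding sum.distrib[symmetric]
      using m(2) 2 by (intro sum.cong) force+
    finally show ?thesis using PP_ge SS_eq QQ0 by simp
  next
    case 3
    obtain j where j: "j \<in> {1..p}" "w j = m" using m by auto
    have c1: "1 \<le> card {i\<in>{1..p}. w i = m}"
    proof -
      have "j \<in> {i\<in>{1..p}. w i = m}" using j by auto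
      moreover have "finite {i\<in>{1..p}. w i = m}" by auto
      ultimately show ?thesis by (metis card_0_eq empty_iff less_one not_le)
    qed
    have N1: "1 \<le> NN" unfolding NN_def
    proof -
      have "(of_bool (w j < 0) :: int) \<le> (\<Sum>i\<in>{1..p}. (of_bool (w i < 0) :: int))"
        using j by (intro member_le_sum) auto
      then show "1 \<le> (\<Sum>i\<in>{1..p}. (of_bool (w i < 0) :: int))" using j 3 by simp
    qed
    have P: "int p \<le> PP" using PP_big[of j] j 3 by simp
    have "int p - 2 \<le> SS"
    proof (rule ccontr)
      assume "\<not> ?thesis"
      hence "SS \<le> int p - 3" by simp
      hence "(int p - 2) * SS \<le> (int p - 2) * (int p - 3)" using p7 by (intro mult_left_mono) auto
      moreover have "(int p - 4) * int p \<le> (int p - 4) * PP" using P p7 by (intro mult_left_mono) auto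
      ultimately have "(int p - 4) * int p + 1 \<le> (int p - 2) * (int p - 3)" using key N1 by linarith
      then show False using p7 by (simp add: algebra_simps)
    qed
    then show ?thesis using c1 by linarith
  qed
qed

end

theorem theorem3p4:
  fixes p :: nat and x :: "nat \<Rightarrow> nat"
  assumes "prime p" and "p \<ge> 7"
    and "\<forall>i\<in>{1..p}. (\<Sum>j\<in>{1..p}. tridiagM p i j * int (x j)) \<le> int (fact (p - 1))"
  shows "int (card {i\<in>{1..p}. real (x i) \<le> fact (p - 1) / real p}) \<ge> \<lceil>real p / 3\<rceil>
    \<and> (\<forall>k::int. int (\<Sum>i\<in>{1..p}. x i) = int (fact (p - 1)) - k \<longrightarrow>
          int (card {i\<in>{1..p}. x i = Max (x ` {1..p})}) \<ge> int p - k - 2)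
    \<and> int (\<Sum>i\<in>{1..p}. x i) \<le> int (fact (p - 1)) - \<lceil>real p / 3\<rceil> + 2"
proof -
  note p7 = assms(2)
  define N :: nat where "N = fact (p - 1)"
  have "[int N = - 1] (mod int p)" using wilson_theorem[OF assms(1)] unfolding N_def by simp
  hence "int p dvd int N + 1" by (simp add: cong_iff_dvd_diff)
  hence "p dvd N + 1" by (metis int_dvd_int_iff of_nat_1 of_nat_add)
  then obtain K where K: "N + 1 = p * K" by blast
  define w where "w i = int K - int (x i)" for i
  have rowsum: "(\<Sum>j\<in>{1..p}. tridiagM p i j) = int p" if "i \<in> {1..p}" for i
    using row_expand[OF that, of "\<lambda>_. 1"] p7 that by auto
  have H: "\<forall>i\<in>{1..p}. 1 \<le> (if i = 1 \<or> i = p then int p - 1 else int p - 2) * w i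
           + (if i < p then w (i+1) else 0) + (if i \<ge> 2 then w (i-1) else 0)"
  proof
    fix i assume i: "i \<in> {1..p}"
    have "(\<Sum>j\<in>{1..p}. tridiagM p i j * w j) = (\<Sum>j\<in>{1..p}. int K * tridiagM p i j - tridiagM p i j * int (x j))"
      unfolding w_def by (intro sum.cong) (auto simp: algebra_simps)
    also have "\<dots> = int K * (\<Sum>j\<in>{1..p}. tridiagM p i j) - (\<Sum>j\<in>{1..p}. tridiagM p i j * int (x j))"
      by (simp only: sum_subtractf sum_distrib_left)
    also have "\<dots> \<ge> 1"
    proof -
      have "int N + 1 = int p * int K" using arg_cong[OF K, of int] by simp
      moreover have "(\<Sum>j\<in>{1..p}. tridiagM p i j * int (x j)) \<le> int N" using assms(3) i unfolding N_def by blast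
      ultimately show ?thesis using rowsum[OF i] by (simp add: mult.commute)
    qed
    finally show "1 \<le> (if i = 1 \<or> i = p then int p - 1 else int p - 2) * w i
           + (if i < p then w (i+1) else 0) + (if i \<ge> 2 then w (i-1) else 0)"
      using row_expand[OF i, of w] p7 by simp
  qed
  have SSx: "SS p w = int p * int K - int (\<Sum>i\<in>{1..p}. x i)"
    unfolding SS_eq2[OF p7 H] by (simp add: w_def sum_subtractf of_nat_sum)
  have NK: "int N = int p * int K - 1" using K by (metis add_diff_cancel_right' of_nat_add of_nat_mult of_nat_1)
  have P1: "int (card {i\<in>{1..p}. real (x i) \<le> fact (p - 1) / real p}) \<ge> \<lceil>real p / 3\<rceil>"
  proof -
    have "{i\<in>{1..p}. real (x i) \<le> fact (p - 1) / real p} = {i\<in>{1..p}. 1 \<le> w i}"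
    proof -
      have "real (x i) \<le> fact (p - 1) / real p \<longleftrightarrow> 1 \<le> w i" for i
      proof -
        have pp: "real p > 0" using p7 by simp
        have "real (x i) \<le> fact (p - 1) / real p \<longleftrightarrow> real (x i) * real p \<le> real N"
          unfolding N_def using pp by (simp add: pos_le_divide_eq)
        also have "\<dots> \<longleftrightarrow> x i * p \<le> N" by (metis of_nat_le_iff of_nat_mult)
        also have "\<dots> \<longleftrightarrow> x i * p < p * K" using K by linarith
        also have "\<dots> \<longleftrightarrow> x i < K" using p7 by (simp add: mult.commute)
        also have "\<dots> \<longleftrightarrow> 1 \<le> w i" unfolding w_def by linarith
        finally show ?thesis .
      qed
      then show ?thesis by auto
    qed
    moreover have "p \<le> 3 * card {i\<in>{1..p}. 1 \<le> w i}" using card_A[OF p7 H] .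
    ultimately show ?thesis by (simp add: ceiling_le_iff)
  qed
  have P3: "int (\<Sum>i\<in>{1..p}. x i) \<le> int (fact (p - 1)) - \<lceil>real p / 3\<rceil> + 2"
  proof -
    have "int p \<le> 3 * SS p w + 3" using part3[OF p7 H] .
    hence "\<lceil>real p / 3\<rceil> \<le> SS p w + 1" by (simp add: ceiling_le_iff)
    then show ?thesis using SSx NK unfolding N_def by linarith
  qed
  have P2: "\<forall>k::int. int (\<Sum>i\<in>{1..p}. x i) = int (fact (p - 1)) - k \<longrightarrow>
          int (card {i\<in>{1..p}. x i = Max (x ` {1..p})}) \<ge> int p - k - 2"
  proof (intro allI impI)
    fix k :: int assume k: "int (\<Sum>i\<in>{1..p}. x i) = int (fact (p - 1)) - k"
    define M0 where "M0 = Max (x ` {1..p})"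
    have ne: "x ` {1..p} \<noteq> {}" using p7 by auto
    have "M0 \<in> x ` {1..p}" unfolding M0_def using ne by (intro Max_in) auto
    then obtain j where j: "j \<in> {1..p}" "x j = M0" by auto
    have le: "x i \<le> M0" if "i \<in> {1..p}" for i unfolding M0_def using that by (intro Max_ge) auto
    define m where "m = int K - int M0"
    have m1: "m \<in> w ` {1..p}" using j unfolding m_def w_def by auto
    have m2: "\<forall>i\<in>{1..p}. m \<le> w i" using le unfolding m_def w_def by auto
    have eqs: "{i\<in>{1..p}. x i = M0} = {i\<in>{1..p}. w i = m}" unfolding w_def m_def by auto
    have "int p - SS p w - 1 \<le> int (card {i\<in>{1..p}. w i = m})" using part2[OF p7 H m1 m2] .
    then show "int (card {i\<in>{1..p}. x i = Max (x ` {1..p})}) \<ge> int p - k - 2"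
      using eqs SSx NK k unfolding M0_def N_def by simp
  qed
  show ?thesis using P1 P2 P3 by blast
qed

end
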